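(* For $n\ge 2$ let $G_n$ be the intersection graph of the $\binom{n}{2}$ closed intervals $[i,j]$, $1\le i<j\le n$. Then $c(G_n)\le p(G_n)\le \log n+1$, where $\log$ is base $2$.
   Context: A comparability graph is a graph admitting a transitive orientation. $p(G)$ is the minimum number $m$ such that $E(G)$ is the union of the edge sets of $m$ pairwise edge-disjoint comparability subgraphs of $G$; $c(G)$ is the minimum number of comparability subgraphs of $G$ (not necessarily edge-disjoint) whose edge sets cover $E(G)$. *)

theory Defs
  imports Complex_Main
begin

definition simple_graph :: "'a set \<Rightarrow> 'a set set \<Rightarrow> bool" where
  "simple_graph V E \<longleftrightarrow> (\<forall>e\<in>E. \<exists>u v. u \<noteq> v \<and> u \<in> V \<and> v \<in> V \<and> e = {u, v})"

definition transitive_orientation :: "'a set \<Rightarrow> 'a set set \<Rightarrow> ('a \<times> 'a) set \<Rightarrow> bool" where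
  "transitive_orientation V E R \<longleftrightarrow>
     R \<subseteq> V \<times> V \<and>
     (\<forall>u v. {u, v} \<in> E \<and> u \<noteq> v \<longleftrightarrow> (u, v) \<in> R \<or> (v, u) \<in> R) \<and>
     (\<forall>u v. (u, v) \<in> R \<longrightarrow> (v, u) \<notin> R) \<and>
     trans R"

definition comparability_graph :: "'a set \<Rightarrow> 'a set set \<Rightarrow> bool" where
  "comparability_graph V E \<longleftrightarrow> simple_graph V E \<and> (\<exists>R. transitive_orientation V E R)"

definition subgraph :: "'a set \<Rightarrow> 'a set set \<Rightarrow> 'a set \<Rightarrow> 'a set set \<Rightarrow> bool" where
  "subgraph W F V E \<longleftrightarrow> W \<subseteq> V \<and> F \<subseteq> E \<and> simple_graph W F"

definition p_num :: "'a set \<Rightarrow> 'a set set \<Rightarrow> nat" where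
  "p_num V E = (LEAST m. \<exists>W F. (\<forall>i<m. subgraph (W i) (F i) V E \<and> comparability_graph (W i) (F i))
        \<and> (\<Union>i<m. F i) = E \<and> (\<forall>i<m. \<forall>j<m. i \<noteq> j \<longrightarrow> F i \<inter> F j = {}))"

definition c_num :: "'a set \<Rightarrow> 'a set set \<Rightarrow> nat" where
  "c_num V E = (LEAST m. \<exists>W F. (\<forall>i<m. subgraph (W i) (F i) V E \<and> comparability_graph (W i) (F i))
        \<and> (\<Union>i<m. F i) = E)"

definition Gn_vertices :: "nat \<Rightarrow> (nat \<times> nat) set" where
  "Gn_vertices n = {(i, j). 1 \<le> i \<and> i < j \<and> j \<le> n}"

definition Gn_edges :: "nat \<Rightarrow> (nat \<times> nat) set set" where
  "Gn_edges n = {{a, b} | a b. a \<in> Gn_vertices n \<and> b \<in> Gn_vertices n \<and> a \<noteq> b \<and>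
       {real (fst a)..real (snd a)} \<inter> {real (fst b)..real (snd b)} \<noteq> {}}"

end

theory Submission
  imports Defs
begin

definition rkf :: "nat \<Rightarrow> nat \<Rightarrow> nat" where
 "rkf s t = (if s = 0 then (if t = 1 then 3 else 0) else (if t = 1 then 1 else 2))"

lemma core0:
  fixes P Q sa sb sc ta tb tc :: nat
  assumes "sa < 2" "sb < 2" "sc < 2" "ta < 2" "tb < 2" "tc < 2"
    "2*P+sa \<le> 2*Q+ta" "2*P+sb \<le> 2*Q+tb"
    "2*P+sa \<le> 2*Q+tb" "2*P+sb \<le> 2*Q+ta"
    "rkf sa ta < rkf sb tb" "rkf sb tb < rkf sc tc"
  shows "2*P+sa < 2*Q+tc \<and> 2*P+sc < 2*Q+ta"
proof (cases "P < Q")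
  case True then show ?thesis using assms by linarith
next
  case False
  then have "P = Q" using assms by linarith
  then show ?thesis using assms unfolding rkf_def
    by (auto simp: less_Suc_eq numeral_2_eq_2 split: if_splits)
qed

lemma rkf_inj:
  fixes s t s' t' :: nat
  assumes "s < 2" "t < 2" "s' < 2" "t' < 2" "rkf s t = rkf s' t'"
  shows "s = s' \<and> t = t'"
proof -
  have "s = 0 \<or> s = 1" "t = 0 \<or> t = 1" "s' = 0 \<or> s' = 1" "t' = 0 \<or> t' = 1"
    using assms(1-4) by auto
  then show ?thesis using assms(5) unfolding rkf_def by auto
qed

lemma inter_iff:
  fixes i j i' j' :: nat
  shows "({real i..real j} \<inter> {real i'..real j'} \<noteq> {}) \<longleftrightarrow> (i \<le> j \<and> i' \<le> j' \<and> i \<le> j' \<and> i' \<le> j)"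
proof
  assume "{real i..real j} \<inter> {real i'..real j'} \<noteq> {}"
  then obtain x where "x \<in> {real i..real j} \<inter> {real i'..real j'}" by blast
  then have "real i \<le> x" "x \<le> real j" "real i' \<le> x" "x \<le> real j'" by auto
  then have "real i \<le> real j" "real i' \<le> real j'" "real i \<le> real j'" "real i' \<le> real j"
    by linarith+
  then show "i \<le> j \<and> i' \<le> j' \<and> i \<le> j' \<and> i' \<le> j" by simp
next
  assume "i \<le> j \<and> i' \<le> j' \<and> i \<le> j' \<and> i' \<le> j"
  then have "real (max i i') \<in> {real i..real j} \<inter> {real i'..real j'}" by auto
  then show "{real i..real j} \<inter> {real i'..real j'} \<noteq> {}" by blast
qed

lemma edge_iff:
  "{a,b} \<in> Gn_edges n \<longleftrightarrow> a \<in> Gn_vertices n \<and> b \<in> Gn_vertices n \<and> a \<noteq> b \<and> fst a \<le> snd b \<and> fst b \<le> snd a"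
proof
  assume "{a,b} \<in> Gn_edges n"
  then obtain a' b' where h: "{a,b} = {a',b'}" "a' \<in> Gn_vertices n" "b' \<in> Gn_vertices n" "a' \<noteq> b'"
    "{real (fst a')..real (snd a')} \<inter> {real (fst b')..real (snd b')} \<noteq> {}"
    unfolding Gn_edges_def by blast
  then have "fst a' \<le> snd b' \<and> fst b' \<le> snd a'" using inter_iff by blast
  with h show "a \<in> Gn_vertices n \<and> b \<in> Gn_vertices n \<and> a \<noteq> b \<and> fst a \<le> snd b \<and> fst b \<le> snd a"
    by (auto simp: doubleton_eq_iff)
next
  assume h: "a \<in> Gn_vertices n \<and> b \<in> Gn_vertices n \<and> a \<noteq> b \<and> fst a \<le> snd b \<and> fst b \<le> snd a"
  then have "fst a \<le> snd a" "fst b \<le> snd b" unfolding Gn_vertices_def by auto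
  with h have "{real (fst a)..real (snd a)} \<inter> {real (fst b)..real (snd b)} \<noteq> {}"
    using inter_iff by blast
  with h show "{a,b} \<in> Gn_edges n" unfolding Gn_edges_def by blast
qed

lemma simple_E: "simple_graph (Gn_vertices n) (Gn_edges n)"
  unfolding simple_graph_def Gn_edges_def by blast

definition q :: "nat \<Rightarrow> nat \<times> nat \<Rightarrow> nat \<times> nat" where
  "q k a = (fst a div 2^k, snd a div 2^k)"

definition lev :: "nat \<Rightarrow> nat \<times> nat \<Rightarrow> nat \<times> nat \<Rightarrow> bool" where
  "lev k a b \<longleftrightarrow> q k a \<noteq> q k b \<and> q (Suc k) a = q (Suc k) b"

definition rk :: "nat \<Rightarrow> nat \<times> nat \<Rightarrow> nat" where
  "rk k a = rkf (fst a div 2^k mod 2) (snd a div 2^k mod 2)"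

definition Fl :: "nat \<Rightarrow> nat \<Rightarrow> (nat \<times> nat) set set" where
  "Fl n k = {e \<in> Gn_edges n. \<exists>a b. e = {a,b} \<and> lev k a b}"

definition Rl :: "nat \<Rightarrow> nat \<Rightarrow> ((nat \<times> nat) \<times> (nat \<times> nat)) set" where
  "Rl n k = {(a,b). {a,b} \<in> Gn_edges n \<and> lev k a b \<and> rk k a < rk k b}"

lemma div_Suc_pow: "(x::nat) div 2^(Suc k) = x div 2^k div 2"
  by (metis div_mult2_eq power_Suc2)

lemma q_Suc: "q (Suc k) a = (fst (q k a) div 2, snd (q k a) div 2)"
  by (simp only: q_def div_Suc_pow fst_conv snd_conv)

lemma q_mono: assumes "q k a = q k b" "k \<le> k'" shows "q k' a = q k' b"
  using assms(2)
proof (induction k' rule: dec_induct)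
  case base then show ?case using assms(1) .
next
  case (step m) then show ?case by (simp add: q_Suc)
qed

lemma lev_sym: "lev k a b = lev k b a"
  unfolding lev_def by auto

lemma F_mem: "{u,v} \<in> Fl n k \<longleftrightarrow> {u,v} \<in> Gn_edges n \<and> lev k u v"
proof
  assume "{u,v} \<in> Fl n k"
  then obtain a b where "{u,v} \<in> Gn_edges n" "{u,v} = {a,b}" "lev k a b" unfolding Fl_def by blast
  then show "{u,v} \<in> Gn_edges n \<and> lev k u v" using lev_sym by (metis doubleton_eq_iff)
next
  assume "{u,v} \<in> Gn_edges n \<and> lev k u v"
  then show "{u,v} \<in> Fl n k" unfolding Fl_def by blast
qed

lemma rk_q: "rk k a = rkf (fst (q k a) mod 2) (snd (q k a) mod 2)"
  unfolding rk_def q_def by simp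

lemma mod2_eq: "(x::nat) div 2 = y div 2 \<Longrightarrow> x mod 2 = y mod 2 \<Longrightarrow> x = y"
  by (metis div_mult_mod_eq)

lemma lev_rk: assumes "lev k a b" shows "rk k a \<noteq> rk k b"
proof
  assume r: "rk k a = rk k b"
  have m: "fst (q k a) mod 2 = fst (q k b) mod 2 \<and> snd (q k a) mod 2 = snd (q k b) mod 2"
    using rkf_inj[OF _ _ _ _ r[unfolded rk_q]] by simp
  have d: "fst (q k a) div 2 = fst (q k b) div 2 \<and> snd (q k a) div 2 = snd (q k b) div 2"
    using assms unfolding lev_def q_Suc by simp
  have "q k a = q k b" using m d mod2_eq by (metis prod.expand)
  then show False using assms unfolding lev_def by simp
qed

lemma lev_exists: "a \<noteq> b \<Longrightarrow> q L a = q L b \<Longrightarrow> \<exists>k<L. lev k a b"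
proof (induction L)
  case 0 then show ?case by (simp add: q_def prod_eq_iff)
next
  case (Suc L)
  show ?case
  proof (cases "q L a = q L b")
    case True then show ?thesis using Suc by (meson less_SucI)
  next
    case False then show ?thesis using Suc unfolding lev_def by blast
  qed
qed

lemma lev_unique: assumes "lev k a b" "lev k' a b" shows "k = k'"
proof (rule ccontr)
  assume "k \<noteq> k'"
  then consider "k < k'" | "k' < k" by linarith
  then show False
  proof cases
    case 1 then show False using assms q_mono[of "Suc k" a b k'] unfolding lev_def by auto
  next
    case 2 then show False using assms q_mono[of "Suc k'" a b k] unfolding lev_def by auto
  qed
qed

lemma div_less_imp: "(x::nat) div h < y div h \<Longrightarrow> x < y"
  by (meson div_le_mono not_le)

lemma trans_R: "trans (Rl n k)"
proof (rule transI)
  fix a b c assume ab: "(a,b) \<in> Rl n k" and bc: "(b,c) \<in> Rl n k"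
  let ?h = "(2::nat)^k"
  have eab: "{a,b} \<in> Gn_edges n" "lev k a b" "rk k a < rk k b" using ab unfolding Rl_def by auto
  have ebc: "{b,c} \<in> Gn_edges n" "lev k b c" "rk k b < rk k c" using bc unfolding Rl_def by auto
  have vab: "a \<in> Gn_vertices n" "b \<in> Gn_vertices n" "fst a \<le> snd b" "fst b \<le> snd a"
    using eab(1) edge_iff by blast+
  have vbc: "c \<in> Gn_vertices n" "fst b \<le> snd c" "fst c \<le> snd b"
    using ebc(1) edge_iff by blast+
  have le: "fst a \<le> snd a" "fst b \<le> snd b" "fst c \<le> snd c"
    using vab vbc unfolding Gn_vertices_def by auto
  have qa: "q (Suc k) a = q (Suc k) c" using eab(2) ebc(2) unfolding lev_def by simp
  define ua where "ua = fst a div ?h"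
  define ub where "ub = fst b div ?h"
  define uc where "uc = fst c div ?h"
  define va where "va = snd a div ?h"
  define vb where "vb = snd b div ?h"
  define vc where "vc = snd c div ?h"
  have P: "ua div 2 = ub div 2" "uc div 2 = ub div 2" "va div 2 = vb div 2" "vc div 2 = vb div 2"
  proof -
    have "q (Suc k) a = q (Suc k) b" "q (Suc k) c = q (Suc k) b"
      using eab(2) ebc(2) unfolding lev_def by auto
    then show "ua div 2 = ub div 2" "uc div 2 = ub div 2" "va div 2 = vb div 2" "vc div 2 = vb div 2"
      unfolding ua_def ub_def uc_def va_def vb_def vc_def
      by (simp_all only: q_Suc q_def fst_conv snd_conv prod.inject div_Suc_pow)
  qed
  define Pp where "Pp = ub div 2"
  define Qq where "Qq = vb div 2"
  define sa where "sa = ua mod 2"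
  define sb where "sb = ub mod 2"
  define sc where "sc = uc mod 2"
  define ta where "ta = va mod 2"
  define tb where "tb = vb mod 2"
  define tc where "tc = vc mod 2"
  have dec: "ua = 2*Pp + sa" "ub = 2*Pp + sb" "uc = 2*Pp + sc"
    "va = 2*Qq + ta" "vb = 2*Qq + tb" "vc = 2*Qq + tc"
    unfolding Pp_def Qq_def sa_def sb_def sc_def ta_def tb_def tc_def
    using P by (metis div_mult_mod_eq mult.commute)+
  have ineq: "ua \<le> va" "ub \<le> vb" "ua \<le> vb" "ub \<le> va"
    unfolding ua_def ub_def va_def vb_def using le vab by (auto intro: div_le_mono)
  have rks: "rkf sa ta < rkf sb tb" "rkf sb tb < rkf sc tc"
    using eab(3) ebc(3) unfolding rk_def ua_def ub_def uc_def va_def vb_def vc_def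
      sa_def sb_def sc_def ta_def tb_def tc_def by auto
  have lt2: "sa < 2" "sb < 2" "sc < 2" "ta < 2" "tb < 2" "tc < 2"
    unfolding sa_def sb_def sc_def ta_def tb_def tc_def by simp_all
  have c0: "2*Pp+sa < 2*Qq+tc \<and> 2*Pp+sc < 2*Qq+ta"
    apply (rule core0[OF lt2 _ _ _ _ rks])
    using ineq unfolding dec by simp_all
  then have "ua < vc" "uc < va" unfolding dec by simp_all
  then have "fst a < snd c" "fst c < snd a"
    unfolding ua_def vc_def uc_def va_def using div_less_imp by blast+
  moreover have "rk k a < rk k c" using eab(3) ebc(3) by simp
  moreover then have "a \<noteq> c" by auto
  ultimately have eac: "{a,c} \<in> Gn_edges n" using edge_iff vab vbc by auto
  have "q k a \<noteq> q k c" using \<open>rk k a < rk k c\<close> rk_q by (metis less_irrefl)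
  then have "lev k a c" using qa unfolding lev_def by simp
  then show "(a,c) \<in> Rl n k" using eac \<open>rk k a < rk k c\<close> unfolding Rl_def by simp
qed

lemma comp_level: "comparability_graph (Gn_vertices n) (Fl n k)"
  unfolding comparability_graph_def
proof
  show "simple_graph (Gn_vertices n) (Fl n k)"
    using simple_E unfolding simple_graph_def Fl_def by blast
  show "\<exists>R. transitive_orientation (Gn_vertices n) (Fl n k) R"
  proof (intro exI[of _ "Rl n k"])
    show "transitive_orientation (Gn_vertices n) (Fl n k) (Rl n k)"
      unfolding transitive_orientation_def
    proof (intro conjI allI)
      show "Rl n k \<subseteq> Gn_vertices n \<times> Gn_vertices n"
        unfolding Rl_def using edge_iff by blast
      show "trans (Rl n k)" by (rule trans_R)
    next
      fix u v
      show "({u, v} \<in> Fl n k \<and> u \<noteq> v) = ((u, v) \<in> Rl n k \<or> (v, u) \<in> Rl n k)"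
        unfolding F_mem Rl_def using lev_rk[of k u v] lev_sym[of k u v]
        by (auto simp: insert_commute)
    next
      fix u v
      show "(u, v) \<in> Rl n k \<longrightarrow> (v, u) \<notin> Rl n k"
        unfolding Rl_def by auto
    qed
  qed
qed


lemma q_L: assumes "a \<in> Gn_vertices n" "n < 2^L" shows "q L a = (0,0)"
  using assms unfolding Gn_vertices_def q_def by auto

lemma partition_exists:
  assumes "n < 2^L"
  shows "\<exists>W F. (\<forall>i<L. subgraph (W i) (F i) (Gn_vertices n) (Gn_edges n) \<and> comparability_graph (W i) (F i))
        \<and> (\<Union>i<L. F i) = Gn_edges n \<and> (\<forall>i<L. \<forall>j<L. i \<noteq> j \<longrightarrow> F i \<inter> F j = {})"
proof (intro exI conjI allI impI)
  fix i assume "i < L"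
  show "subgraph (Gn_vertices n) (Fl n i) (Gn_vertices n) (Gn_edges n)"
    unfolding subgraph_def using comp_level[of n i] unfolding comparability_graph_def Fl_def by auto
  show "comparability_graph (Gn_vertices n) (Fl n i)" by (rule comp_level)
next
  show "(\<Union>i<L. Fl n i) = Gn_edges n"
  proof
    show "(\<Union>i<L. Fl n i) \<subseteq> Gn_edges n" unfolding Fl_def by auto
    show "Gn_edges n \<subseteq> (\<Union>i<L. Fl n i)"
    proof
      fix e assume e: "e \<in> Gn_edges n"
      then obtain a b where ab: "e = {a,b}" unfolding Gn_edges_def by blast
      then have h: "a \<in> Gn_vertices n" "b \<in> Gn_vertices n" "a \<noteq> b" using e edge_iff by blast+
      have "q L a = q L b" using q_L[OF h(1) assms] q_L[OF h(2) assms] by simp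
      then obtain k where "k < L" "lev k a b" using lev_exists h(3) by blast
      then show "e \<in> (\<Union>i<L. Fl n i)" using e ab unfolding Fl_def by blast
    qed
  qed
next
  fix i j assume "i < L" "j < L" "i \<noteq> j"
  show "Fl n i \<inter> Fl n j = {}"
  proof (rule ccontr)
    assume "Fl n i \<inter> Fl n j \<noteq> {}"
    then obtain e where "e \<in> Fl n i" "e \<in> Fl n j" by blast
    then obtain a b a' b' where "e = {a,b}" "lev i a b" "e = {a',b'}" "lev j a' b'"
      unfolding Fl_def by blast
    then have "lev j a b" using lev_sym by (metis doubleton_eq_iff)
    then show False using lev_unique \<open>lev i a b\<close> \<open>i \<noteq> j\<close> by blast
  qed
qed

lemma least_mono:
  fixes P Q :: "nat \<Rightarrow> bool"
  assumes "P k" "\<And>m. P m \<Longrightarrow> Q m"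
  shows "(LEAST m. Q m) \<le> (LEAST m. P m)"
proof -
  have "P (LEAST m. P m)" using assms(1) by (rule LeastI)
  then have "Q (LEAST m. P m)" by (rule assms(2))
  then show ?thesis by (rule Least_le)
qed

theorem theorem8:
  fixes n :: nat
  assumes "n \<ge> 2"
  shows "c_num (Gn_vertices n) (Gn_edges n) \<le> p_num (Gn_vertices n) (Gn_edges n)
     \<and> real (p_num (Gn_vertices n) (Gn_edges n)) \<le> log 2 (real n) + 1"
proof -
  define L where "L = nat \<lfloor>log 2 (real n)\<rfloor> + 1"
  have lg0: "0 \<le> log 2 (real n)" using assms by simp
  have RL: "real L = real_of_int \<lfloor>log 2 (real n)\<rfloor> + 1" unfolding L_def using lg0 by simp
  have "log 2 (real n) < real L" unfolding RL by linarith
  then have "real n < 2 powr real L" using log_less_iff[of 2 "real n"] assms by simp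
  then have "real n < 2 ^ L" by (simp add: powr_realpow)
  then have nL: "n < 2^L" by (metis of_nat_less_iff of_nat_numeral of_nat_power)
  have Lb: "real L \<le> log 2 (real n) + 1" unfolding RL by linarith
  let ?P = "\<lambda>m::nat. \<exists>W F. (\<forall>i<m. subgraph (W i) (F i) (Gn_vertices n) (Gn_edges n) \<and> comparability_graph (W i) (F i))
        \<and> (\<Union>i<m. F i) = Gn_edges n \<and> (\<forall>i<m. \<forall>j<m. i \<noteq> j \<longrightarrow> F i \<inter> F j = {})"
  let ?C = "\<lambda>m::nat. \<exists>W F. (\<forall>i<m. subgraph (W i) (F i) (Gn_vertices n) (Gn_edges n) \<and> comparability_graph (W i) (F i))
        \<and> (\<Union>i<m. F i) = Gn_edges n"
  have PL: "?P L" using partition_exists[OF nL] .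
  have 1: "c_num (Gn_vertices n) (Gn_edges n) \<le> p_num (Gn_vertices n) (Gn_edges n)"
    unfolding p_num_def c_num_def apply (rule least_mono[of ?P L ?C, OF PL])
    apply (elim exE conjE)
    apply (rule exI, rule exI, rule conjI, assumption, assumption)
    done
  have "p_num (Gn_vertices n) (Gn_edges n) \<le> L" unfolding p_num_def by (fact Least_le[of ?P L, OF PL])
  then have "real (p_num (Gn_vertices n) (Gn_edges n)) \<le> real L" by simp
  with Lb 1 show ?thesis by linarith
qed

end
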